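(* Let $M=(S,\mathrm{Act},P)$ be an MDP and $T\subseteq S$. Let $(x,r,\sigma)$ with $x\in[0,1]^S$, $r\in\mathbb{N}_\infty^S$ and $\sigma$ a strategy satisfy: (1) $D^{\sigma}(r)\le r$; (2) $x\le B^{\sigma}(x)$; (3) for all $s\in S\setminus T$, $x(s)>0$ implies $r(s)<\infty$ (inequalities pointwise). Then for all $s\in S$: $\Pr^{\max}_s(\Diamond T)\ge\Pr^{\sigma}_s(\Diamond T)\ge x(s)$.
   Context: An MDP is a tuple $M=(S,\mathrm{Act},P)$ with $S$ finite, $\mathrm{Act}$ finite, $P\colon S\times\mathrm{Act}\times S\to[0,1]$ with $\sum_{s'}P(s,a,s')\in\{0,1\}$; $\mathrm{Act}(s)=\{a\mid\sum_{s'}P(s,a,s')=1\}$ is nonempty for all $s$; $\mathrm{Post}(s,a)=\{s'\mid P(s,a,s')>0\}$. A strategy is $\sigma\colon S\to\mathrm{Act}$ with $\sigma(s)\in\mathrm{Act}(s)$, inducing a Markov chain with transitions $P(s,\sigma(s),\cdot)$; $\Pr^\sigma_s(\Diamond T)$ is the probability of visiting $T$ from $s$ and $\Pr^{\max}_s(\Diamond T)=\max_\sigma\Pr^\sigma_s(\Diamond T)$. $\mathbb{N}_\infty=\mathbb{N}\cup\{\infty\}$, $1+\infty=\infty$. $D^{\sigma}(r)(s)=0$ for $s\in T$ and $1+\min_{s'\in\mathrm{Post}(s,\sigma(s))}r(s')$ for $s\notin T$. $B^{\sigma}(x)(s)=1$ for $s\in T$ and $\sum_{s'\in\mathrm{Post}(s,\sigma(s))}P(s,\sigma(s),s')x(s')$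 for $s\notin T$. *)

theory Defs
  imports Complex_Main "HOL-Library.Extended_Nat"
begin

definition is_mdp :: "('s::finite \<Rightarrow> 'a::finite \<Rightarrow> 's \<Rightarrow> real) \<Rightarrow> bool" where
  "is_mdp P \<longleftrightarrow>
     (\<forall>s a s'. 0 \<le> P s a s' \<and> P s a s' \<le> 1) \<and>
     (\<forall>s a. (\<Sum>s'\<in>UNIV. P s a s') \<in> {0, 1}) \<and>
     (\<forall>s. \<exists>a. (\<Sum>s'\<in>UNIV. P s a s') = 1)"

definition Act :: "('s::finite \<Rightarrow> 'a \<Rightarrow> 's \<Rightarrow> real) \<Rightarrow> 's \<Rightarrow> 'a set" where
  "Act P s = {a. (\<Sum>s'\<in>UNIV. P s a s') = 1}"

definition Post :: "('s \<Rightarrow> 'a \<Rightarrow> 's \<Rightarrow> real) \<Rightarrow> 's \<Rightarrow> 'a \<Rightarrow> 's set" where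
  "Post P s a = {s'. P s a s' > 0}"

definition is_strategy :: "('s::finite \<Rightarrow> 'a \<Rightarrow> 's \<Rightarrow> real) \<Rightarrow> ('s \<Rightarrow> 'a) \<Rightarrow> bool" where
  "is_strategy P \<sigma> \<longleftrightarrow> (\<forall>s. \<sigma> s \<in> Act P s)"

text \<open>Probability, in the Markov chain induced by \<sigma>, that the first visit to T
  happens exactly at step n (sum over all finite paths s_0 \<dots> s_n with
  s_n \<in> T and s_i \<notin> T for i < n of the product of transition probabilities).\<close>

fun first_hit :: "('s::finite \<Rightarrow> 'a \<Rightarrow> 's \<Rightarrow> real) \<Rightarrow> ('s \<Rightarrow> 'a) \<Rightarrow> 's set \<Rightarrow> nat \<Rightarrow> 's \<Rightarrow> real" where
  "first_hit P \<sigma> T 0 s = (if s \<in> T then 1 else 0)"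
| "first_hit P \<sigma> T (Suc n) s =
     (if s \<in> T then 0 else (\<Sum>s'\<in>UNIV. P s (\<sigma> s) s' * first_hit P \<sigma> T n s'))"

text \<open>Pr^\<sigma>_s(\<Diamond>T): the probability of visiting T from s, i.e. the measure of the
  disjoint union over n of the cylinder sets "first visit to T at step n".\<close>

definition reach_prob :: "('s::finite \<Rightarrow> 'a \<Rightarrow> 's \<Rightarrow> real) \<Rightarrow> ('s \<Rightarrow> 'a) \<Rightarrow> 's set \<Rightarrow> 's \<Rightarrow> real" where
  "reach_prob P \<sigma> T s = (\<Sum>n. first_hit P \<sigma> T n s)"

definition max_reach_prob :: "('s::finite \<Rightarrow> 'a::finite \<Rightarrow> 's \<Rightarrow> real) \<Rightarrow> 's set \<Rightarrow> 's \<Rightarrow> real" where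
  "max_reach_prob P T s = Max {reach_prob P \<sigma> T s | \<sigma>. is_strategy P \<sigma>}"

definition Dop :: "('s::finite \<Rightarrow> 'a \<Rightarrow> 's \<Rightarrow> real) \<Rightarrow> ('s \<Rightarrow> 'a) \<Rightarrow> 's set \<Rightarrow> ('s \<Rightarrow> enat) \<Rightarrow> 's \<Rightarrow> enat" where
  "Dop P \<sigma> T r s = (if s \<in> T then 0 else 1 + Min (r ` Post P s (\<sigma> s)))"

definition Bop :: "('s::finite \<Rightarrow> 'a \<Rightarrow> 's \<Rightarrow> real) \<Rightarrow> ('s \<Rightarrow> 'a) \<Rightarrow> 's set \<Rightarrow> ('s \<Rightarrow> real) \<Rightarrow> 's \<Rightarrow> real" where
  "Bop P \<sigma> T x s = (if s \<in> T then 1 else (\<Sum>s'\<in>Post P s (\<sigma> s). P s (\<sigma> s) s' * x s'))"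

end

theory Submission
  imports Defs
begin

lemma fh_nonneg:
  assumes "is_mdp P"
  shows "0 \<le> first_hit P \<sigma> T n s"
proof (induction n arbitrary: s)
  case 0 then show ?case by simp
next
  case (Suc n)
  have "\<forall>s a s'. 0 \<le> P s a s'" using assms by (simp add: is_mdp_def)
  then show ?case using Suc by (auto intro!: sum_nonneg mult_nonneg_nonneg)
qed

lemma strat_sum:
  assumes "is_strategy P \<sigma>"
  shows "(\<Sum>s'\<in>UNIV. P s (\<sigma> s) s') = 1"
  using assms by (simp add: is_strategy_def Act_def)

lemma fh_partial_le:
  assumes "is_mdp P" "is_strategy P \<sigma>"
  shows "(\<Sum>n<N. first_hit P \<sigma> T n s) \<le> 1"
proof (induction N arbitrary: s)
  case 0 then show ?case by simp
next
  case (Suc N)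
  have Pn: "\<forall>s a s'. 0 \<le> P s a s'" using assms by (simp add: is_mdp_def)
  have "(\<Sum>n<Suc N. first_hit P \<sigma> T n s) = first_hit P \<sigma> T 0 s + (\<Sum>n<N. first_hit P \<sigma> T (Suc n) s)"
    by (rule sum.lessThan_Suc_shift)
  also have "\<dots> \<le> 1"
  proof (cases "s \<in> T")
    case True then show ?thesis by simp
  next
    case False
    have "(\<Sum>n<N. first_hit P \<sigma> T (Suc n) s) = (\<Sum>n<N. \<Sum>s'\<in>UNIV. P s (\<sigma> s) s' * first_hit P \<sigma> T n s')"
      using False by simp
    also have "\<dots> = (\<Sum>s'\<in>UNIV. P s (\<sigma> s) s' * (\<Sum>n<N. first_hit P \<sigma> T n s'))"
      by (subst sum.swap) (simp add: sum_distrib_left)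
    also have "\<dots> \<le> (\<Sum>s'\<in>UNIV. P s (\<sigma> s) s' * 1)"
      by (intro sum_mono mult_left_mono Suc.IH) (use Pn in auto)
    also have "\<dots> = 1" using strat_sum[OF assms(2)] by simp
    finally show ?thesis using False by simp
  qed
  finally show ?case .
qed

lemma fh_summable:
  assumes "is_mdp P" "is_strategy P \<sigma>"
  shows "summable (\<lambda>n. first_hit P \<sigma> T n s)"
  by (rule summableI_nonneg_bounded[where x=1]) (use fh_nonneg[OF assms(1)] fh_partial_le[OF assms] in auto)

lemma reach_T:
  assumes "is_mdp P" "is_strategy P \<sigma>" "s \<in> T"
  shows "reach_prob P \<sigma> T s = 1"
proof -
  have z: "\<forall>n\<in>-{0}. first_hit P \<sigma> T n s = 0"
  proof
    fix n :: nat assume "n \<in> -{0}"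
    then obtain k where "n = Suc k" by (metis ComplD insertI1 not0_implies_Suc)
    then show "first_hit P \<sigma> T n s = 0" using assms(3) by simp
  qed
  have "reach_prob P \<sigma> T s = (\<Sum>n\<in>{0}. first_hit P \<sigma> T n s)"
    unfolding reach_prob_def by (rule suminf_finite) (use z in auto)
  then show ?thesis using assms(3) by simp
qed

lemma reach_notT:
  assumes "is_mdp P" "is_strategy P \<sigma>" "s \<notin> T"
  shows "reach_prob P \<sigma> T s = (\<Sum>s'\<in>UNIV. P s (\<sigma> s) s' * reach_prob P \<sigma> T s')"
proof -
  have "(\<Sum>n. first_hit P \<sigma> T (Suc n) s) = reach_prob P \<sigma> T s - first_hit P \<sigma> T 0 s"
    unfolding reach_prob_def by (rule suminf_split_head[OF fh_summable[OF assms(1,2)]])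
  then have "reach_prob P \<sigma> T s = (\<Sum>n. first_hit P \<sigma> T (Suc n) s)"
    using assms(3) by simp
  also have "\<dots> = (\<Sum>n. \<Sum>s'\<in>UNIV. P s (\<sigma> s) s' * first_hit P \<sigma> T n s')"
    using assms(3) by simp
  also have "\<dots> = (\<Sum>s'\<in>UNIV. \<Sum>n. P s (\<sigma> s) s' * first_hit P \<sigma> T n s')"
    by (rule suminf_sum) (intro summable_mult fh_summable[OF assms(1,2)])
  also have "\<dots> = (\<Sum>s'\<in>UNIV. P s (\<sigma> s) s' * reach_prob P \<sigma> T s')"
    unfolding reach_prob_def by (intro sum.cong refl suminf_mult fh_summable[OF assms(1,2)])
  finally show ?thesis .
qed

theorem proposition5:
  fixes P :: "'s::finite \<Rightarrow> 'a::finite \<Rightarrow> 's \<Rightarrow> real"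
    and T :: "'s set" and x :: "'s \<Rightarrow> real" and r :: "'s \<Rightarrow> enat" and \<sigma> :: "'s \<Rightarrow> 'a"
  assumes "is_mdp P"
    and "is_strategy P \<sigma>"
    and "\<forall>s. 0 \<le> x s \<and> x s \<le> 1"
    and "\<forall>s. Dop P \<sigma> T r s \<le> r s"
    and "\<forall>s. x s \<le> Bop P \<sigma> T x s"
    and "\<forall>s. s \<notin> T \<longrightarrow> x s > 0 \<longrightarrow> r s < \<infinity>"
  shows "\<forall>s. max_reach_prob P T s \<ge> reach_prob P \<sigma> T s \<and> reach_prob P \<sigma> T s \<ge> x s"
proof -
  note mdp = assms(1) and st = assms(2)
  have Pn: "\<And>s a s'. 0 \<le> P s a s'" using mdp by (simp add: is_mdp_def)
  define y where "y = reach_prob P \<sigma> T"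
  have y0: "\<And>s. 0 \<le> y s" unfolding y_def reach_prob_def
    by (intro suminf_nonneg fh_summable[OF mdp st] fh_nonneg[OF mdp])
  have postU: "\<And>s f. (\<Sum>s'\<in>Post P s (\<sigma> s). P s (\<sigma> s) s' * f s') = (\<Sum>s'\<in>UNIV. P s (\<sigma> s) s' * f s')"
  proof -
    fix s and f :: "'s \<Rightarrow> real"
    show "(\<Sum>s'\<in>Post P s (\<sigma> s). P s (\<sigma> s) s' * f s') = (\<Sum>s'\<in>UNIV. P s (\<sigma> s) s' * f s')"
      by (rule sum.mono_neutral_left) (use Pn in \<open>auto simp: Post_def less_le\<close>)
  qed
  have sum1: "\<And>s. (\<Sum>s'\<in>UNIV. P s (\<sigma> s) s') = 1" using strat_sum[OF st] .
  have le: "\<And>s. x s \<le> y s"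
  proof (rule ccontr)
    fix s0 assume "\<not> x s0 \<le> y s0"
    define d where "d s = x s - y s" for s
    define m where "m = Max (range d)"
    have dm: "\<And>s. d s \<le> m" unfolding m_def by simp
    have mpos: "m > 0" using dm[of s0] \<open>\<not> x s0 \<le> y s0\<close> unfolding d_def by linarith
    define M where "M = {s. d s = m}"
    have "m \<in> range d" unfolding m_def by (rule Max_in) auto
    then have Mne: "M \<noteq> {}" unfolding M_def by auto
    define k where "k = Min (r ` M)"
    have "k \<in> r ` M" unfolding k_def by (rule Min_in) (use Mne in auto)
    then obtain s where sM: "s \<in> M" and rs: "r s = k" by auto
    have kmin: "\<And>t. t \<in> M \<Longrightarrow> k \<le> r t" unfolding k_def by simp
    have ds: "d s = m" using sM M_def by simp
    have sT: "s \<notin> T"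
    proof
      assume "s \<in> T"
      then have "y s = 1" unfolding y_def by (rule reach_T[OF mdp st])
      then show False using ds mpos assms(3) unfolding d_def by (metis diff_le_0_iff_le not_le)
    qed
    have "x s > 0" using ds mpos y0[of s] unfolding d_def by linarith
    then have rfin: "r s < \<infinity>" using assms(6) sT by auto
    have ys: "y s = (\<Sum>s'\<in>UNIV. P s (\<sigma> s) s' * y s')"
      unfolding y_def by (rule reach_notT[OF mdp st sT])
    have xs: "x s \<le> (\<Sum>s'\<in>UNIV. P s (\<sigma> s) s' * x s')"
    proof -
      have "x s \<le> Bop P \<sigma> T x s" using assms(5) by blast
      also have "\<dots> = (\<Sum>s'\<in>Post P s (\<sigma> s). P s (\<sigma> s) s' * x s')" using sT by (simp add: Bop_def)
      also have "\<dots> = (\<Sum>s'\<in>UNIV. P s (\<sigma> s) s' * x s')" by (rule postU)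
      finally show ?thesis .
    qed
    have dle: "m \<le> (\<Sum>s'\<in>UNIV. P s (\<sigma> s) s' * d s')"
      using xs ys ds unfolding d_def by (simp add: right_diff_distrib sum_subtractf)
    have succ: "\<And>t. t \<in> Post P s (\<sigma> s) \<Longrightarrow> t \<in> M"
    proof (rule ccontr)
      fix t assume tP: "t \<in> Post P s (\<sigma> s)" and "t \<notin> M"
      then have "d t < m" using dm[of t] unfolding M_def by fastforce
      have "(\<Sum>s'\<in>UNIV. P s (\<sigma> s) s' * d s') < (\<Sum>s'\<in>UNIV. P s (\<sigma> s) s' * m)"
      proof (rule sum_strict_mono_ex1)
        show "\<forall>s'\<in>UNIV. P s (\<sigma> s) s' * d s' \<le> P s (\<sigma> s) s' * m"
          using Pn dm by (simp add: mult_left_mono)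
        show "\<exists>a\<in>UNIV. P s (\<sigma> s) a * d a < P s (\<sigma> s) a * m"
        proof
          show "P s (\<sigma> s) t * d t < P s (\<sigma> s) t * m"
            using tP \<open>d t < m\<close> by (simp add: Post_def)
        qed simp
      qed simp
      also have "\<dots> = m" using sum1[of s] by (simp add: sum_distrib_right[symmetric])
      finally show False using dle by simp
    qed
    have "Post P s (\<sigma> s) \<noteq> {}"
    proof
      assume "Post P s (\<sigma> s) = {}"
      then have "\<And>s'. P s (\<sigma> s) s' = 0" using Pn by (simp add: Post_def) (meson Pn antisym not_le)
      then show False using sum1[of s] by simp
    qed
    moreover have "finite (Post P s (\<sigma> s))" by simp
    ultimately have "Min (r ` Post P s (\<sigma> s)) \<in> r ` Post P s (\<sigma> s)" by (intro Min_in) auto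
    then obtain t where tP: "t \<in> Post P s (\<sigma> s)" and rt: "r t = Min (r ` Post P s (\<sigma> s))" by auto
    have "1 + r t \<le> r s" using assms(4) sT rt by (metis Dop_def)
    moreover have "r s \<le> r t" using kmin[OF succ[OF tP]] rs by simp
    ultimately show False using rfin
      by (cases "r s"; cases "r t") (auto simp: one_enat_def)
  qed
  show ?thesis
  proof
    fix s
    have fin: "finite {reach_prob P \<sigma>' T s | \<sigma>'. is_strategy P \<sigma>'}"
    proof -
      have "{reach_prob P \<sigma>' T s | \<sigma>'. is_strategy P \<sigma>'} \<subseteq> (\<lambda>\<sigma>'. reach_prob P \<sigma>' T s) ` UNIV" by auto
      then show ?thesis by (rule finite_subset) simp
    qed
    have "reach_prob P \<sigma> T s \<le> max_reach_prob P T s"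
      unfolding max_reach_prob_def by (rule Max_ge[OF fin]) (use st in auto)
    then show "max_reach_prob P T s \<ge> reach_prob P \<sigma> T s \<and> reach_prob P \<sigma> T s \<ge> x s"
      using le[of s] unfolding y_def by simp
  qed
qed

end
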